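(* Let \(a,b,c\) be positive integers, \(m\) a positive integer that is not a perfect square, with \(\gcd(am,b^2-c^2m)=1\), and let \(A,B\in\mathbb Z\). If \((x_0,y_0,z_0,w_0)\in\mathbb Z^4\) and \((x',y',z',w')\in\mathbb Z^4\) are both solutions of \(a\sqrt m(x+y\sqrt m)+(b+c\sqrt m)(z+w\sqrt m)=A+B\sqrt m\), then \(am\mid z_0-z'\) and \(a\mid w_0-w'\). *)

theory Defs
  imports Complex_Main
begin

end

theory Submission
  imports Defs "HOL-Computational_Algebra.Nth_Powers"
begin

lemma sqrt_nonsq_irrat:
  fixes m :: int
  assumes "m > 0" "\<not> (\<exists>k::int. m = k ^ 2)"
  shows "sqrt (of_int m) \<notin> \<rat>"
proof
  assume "sqrt (of_int m) \<in> \<rat>"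
  then obtain p q :: int where q: "q > 0" and e: "sqrt (of_int m) = of_int p / of_int q"
    by (auto elim: Rats_cases')
  have "of_int m = (of_int p / of_int q :: real) ^ 2"
    using e assms(1) by (metis of_int_0_less_iff less_imp_le real_sqrt_pow2)
  hence "of_int m * of_int q ^ 2 = (of_int p ^ 2 :: real)"
    using q by (simp add: field_simps power2_eq_square)
  hence eq: "m * q ^ 2 = p ^ 2"
    by (metis of_int_eq_iff of_int_mult of_int_power)
  have "is_nth_power 2 (m * q^2)" unfolding eq by simp
  hence "is_nth_power 2 m"
    using is_nth_power_mult_cancel_right[of 2 "q^2" m] q by simp
  thus False using assms(2) by (auto elim: is_nth_powerE)
qed

lemma lin_zero:
  fixes m P Q :: int
  assumes "m > 0" "\<not> (\<exists>k::int. m = k ^ 2)"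
    and "of_int P + of_int Q * sqrt (of_int m) = 0"
  shows "P = 0 \<and> Q = 0"
proof -
  have "Q = 0"
  proof (rule ccontr)
    assume "Q \<noteq> 0"
    hence "sqrt (of_int m) = - of_int P / of_int Q"
      using assms(3) by (simp add: field_simps)
    hence "sqrt (of_int m) \<in> \<rat>" by simp
    thus False using sqrt_nonsq_irrat assms by blast
  qed
  thus ?thesis using assms(3) by simp
qed

theorem lemma9:
  fixes a b c m A B x0 y0 z0 w0 x' y' z' w' :: int
  assumes "a > 0" and "b > 0" and "c > 0" and "m > 0"
    and "\<not> (\<exists>k::int. m = k ^ 2)"
    and "gcd (a * m) (b ^ 2 - c ^ 2 * m) = 1"
    and "of_int a * sqrt (of_int m) * (of_int x0 + of_int y0 * sqrt (of_int m))
         + (of_int b + of_int c * sqrt (of_int m)) * (of_int z0 + of_int w0 * sqrt (of_int m))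
         = of_int A + of_int B * sqrt (of_int m)"
    and "of_int a * sqrt (of_int m) * (of_int x' + of_int y' * sqrt (of_int m))
         + (of_int b + of_int c * sqrt (of_int m)) * (of_int z' + of_int w' * sqrt (of_int m))
         = of_int A + of_int B * sqrt (of_int m)"
  shows "a * m dvd z0 - z' \<and> a dvd w0 - w'"
proof -
  define X where "X = x0 - x'"
  define Y where "Y = y0 - y'"
  define Z where "Z = z0 - z'"
  define W where "W = w0 - w'"
  define s where "s = sqrt (of_int m)"
  have ss: "s * s = of_int m" unfolding s_def using assms(4) by simp
  have "of_int a * s * (of_int X + of_int Y * s) + (of_int b + of_int c * s) * (of_int Z + of_int W * s) = 0"
    using assms(7,8) unfolding X_def Y_def Z_def W_def s_def[symmetric] by (simp add: algebra_simps)
  hence "of_int a * of_int Y * (s*s) + of_int b * of_int Z + of_int c * of_int W * (s * s)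
     + (of_int a * of_int X + of_int b * of_int W + of_int c * of_int Z) * s = 0"
    by (simp add: algebra_simps)
  hence "of_int (a*m*Y + b*Z + c*m*W) + of_int (a*X + b*W + c*Z) * sqrt (of_int m) = 0"
    unfolding ss by (simp add: s_def algebra_simps)
  hence e1: "a*m*Y + b*Z + c*m*W = 0" and e2: "a*X + b*W + c*Z = 0"
    using lin_zero[OF assms(4,5)] by blast+
  have "(b^2 - c^2*m) * Z = b*(b*Z + c*m*W) - c*m*(c*Z + b*W)"
    by (simp add: algebra_simps power2_eq_square)
  also have "\<dots> = a*m*(c*X - b*Y)"
  proof -
    have "b*Z + c*m*W = -(a*m*Y)" "c*Z + b*W = -(a*X)" using e1 e2 by linarith+
    thus ?thesis by (simp add: algebra_simps)
  qed
  finally have d1: "a*m dvd (b^2 - c^2*m) * Z" by simp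
  have "(b^2 - c^2*m) * W = b*(c*Z + b*W) - c*(b*Z + c*m*W)"
    by (simp add: algebra_simps power2_eq_square)
  also have "\<dots> = a*(c*m*Y - b*X)"
  proof -
    have "b*Z + c*m*W = -(a*m*Y)" "c*Z + b*W = -(a*X)" using e1 e2 by linarith+
    thus ?thesis by (simp add: algebra_simps)
  qed
  finally have d2: "a dvd (b^2 - c^2*m) * W" by simp
  have c1: "coprime (a*m) (b^2 - c^2*m)" using assms(6) by (simp add: coprime_iff_gcd_eq_1)
  hence c2: "coprime a (b^2 - c^2*m)" by simp
  have "a*m dvd Z" using d1 c1 by (metis coprime_dvd_mult_right_iff)
  moreover have "a dvd W" using d2 c2 by (metis coprime_dvd_mult_right_iff)
  ultimately show ?thesis unfolding Z_def W_def by simp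
qed

end
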